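(* Let $j,i,j',i',j'',i''$ be nonnegative integers satisfying $i'-j=i''-j'=i-j''$. Then $u^{j,i,j',i',j'',i''}$ is invariant under the natural action of the dihedral group $D_6$ (the symmetry group of a hexagon) on its six arguments, viewed as placed cyclically in the order $(j,i,j',i',j'',i'')$ around a hexagon; i.e. $u^{j,i,j',i',j'',i''}=u^{j',i',j'',i'',j,i}$ (cyclic rotation by two places), $u^{j,i,j',i',j'',i''}=u^{i,j',i',j'',i'',j}$ (rotation by one place), and $u^{j,i,j',i',j'',i''}=u^{j'',i',j',i,j,i''}$ (a reflection), hence under all compositions of these.
   Context: $t$ is a formal variable, $\alpha_m=\prod_{r=1}^m(1-t^r)$ and $(x;t)_n=\prod_{s=0}^{n-1}(1-xt^s)$. For nonnegative integers $j,i,j',i',j'',i''$, \[u^{j,i,j',i',j'',i''}=\frac{\alpha_{i+j}}{\alpha_i\alpha_{i'}\alpha_{i''}\alpha_j\alpha_{j''}}\sum_{m=0}^{\min(i,i')}\frac{(t^{-i};t)_m\,(t^{-i'};t)_m}{(t;t)_m\,(t^{-(i+j)};t)_m}\,t^{m(i''+1)}\] (a terminating basic hypergeometric series ${}_2\phi_1$). Note the balance condition $i'-j=i''-j'=i-j''$ is itself preserved by the $D_6$ action. *)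

theory Defs
  imports "HOL-Computational_Algebra.Polynomial" "HOL-Computational_Algebra.Fraction_Field"
begin

definition tt :: "rat poly fract" where
  "tt = Fract [:0, 1:] 1"

definition alpha :: "nat \<Rightarrow> rat poly fract" where
  "alpha m = (\<Prod>r\<in>{1..m}. 1 - tt ^ r)"

definition qpoch :: "rat poly fract \<Rightarrow> nat \<Rightarrow> rat poly fract" where
  "qpoch x n = (\<Prod>s\<in>{0..<n}. 1 - x * tt ^ s)"

definition u :: "nat \<Rightarrow> nat \<Rightarrow> nat \<Rightarrow> nat \<Rightarrow> nat \<Rightarrow> nat \<Rightarrow> rat poly fract" where
  "u j i j' i' j'' i'' =
     alpha (i + j) / (alpha i * alpha i' * alpha i'' * alpha j * alpha j'') *
     (\<Sum>m = 0..min i i'.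
        qpoch (inverse (tt ^ i)) m * qpoch (inverse (tt ^ i')) m /
        (qpoch tt m * qpoch (inverse (tt ^ (i + j))) m) * tt ^ (m * (i'' + 1)))"

end

theory Submission
  imports Defs
begin

lemma tt_pow: "tt ^ r = Fract (monom 1 r) 1"
proof (induction r)
  case 0 then show ?case by (simp add: One_fract_def monom_0 one_pCons)
next
  case (Suc r)
  have "tt ^ Suc r = Fract [:0,1:] 1 * Fract (monom 1 r) 1" by (simp only: power_Suc Suc.IH) (simp add: tt_def)
  also have "\<dots> = Fract (monom 1 (Suc r)) 1" by (simp add: mult_pCons_left monom_Suc)
  finally show ?case .
qed

lemma tt_nz: "tt \<noteq> 0"
  by (simp add: tt_def Zero_fract_def eq_fract)

lemma tt_pow_ne1: "r > 0 \<Longrightarrow> tt ^ r \<noteq> 1"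
proof
  assume r: "r > 0" and h: "tt ^ r = 1"
  have "Fract (monom (1::rat) r) 1 = Fract 1 1" using h by (simp add: tt_pow One_fract_def)
  then have "monom (1::rat) r = 1" by (simp add: eq_fract)
  then have "degree (monom (1::rat) r) = 0" by simp
  then show False using r by (simp add: degree_monom_eq)
qed

lemma alpha_nz: "alpha m \<noteq> 0"
  unfolding alpha_def using tt_pow_ne1 by (auto simp: right_minus_eq)

lemma alpha_0[simp]: "alpha 0 = 1" by (simp add: alpha_def)
lemma alpha_Suc: "alpha (Suc m) = alpha m * (1 - tt ^ Suc m)"
  by (simp add: alpha_def)

lemma qpoch_Suc: "qpoch x (Suc m) = qpoch x m * (1 - x * tt ^ m)"
  by (simp add: qpoch_def)

lemma qpoch_tt: "qpoch tt m = alpha m"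
  by (induction m) (simp_all add: qpoch_def alpha_Suc qpoch_Suc[unfolded qpoch_def])

lemma choose2_Suc: "Suc l choose 2 = (l choose 2) + l"
  by (simp add: numeral_2_eq_2)

definition qbin :: "nat \<Rightarrow> nat \<Rightarrow> rat poly fract" where
  "qbin n k = (if k \<le> n then alpha n / (alpha k * alpha (n - k)) else 0)"

lemma qbin_0[simp]: "qbin n 0 = 1"
  by (simp add: qbin_def alpha_nz)

lemma pow_split: "a = b + c \<Longrightarrow> tt ^ a = tt ^ b * tt ^ c"
  by (simp only: power_add)

lemma pascal_fld0:
  fixes An Al Ad P X Y :: "'a::field"
  assumes "Al \<noteq> 0" "Ad \<noteq> 0" "X \<noteq> 0" "Y \<noteq> 0"
  shows "An * (Y + P * X) / (Al * X * (Ad * Y)) = An / (Al * X * Ad) + P * (An / (Al * (Ad * Y)))"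
  using assms by (simp add: field_simps)

lemma pascal_fld:
  fixes An Al Ad P Q :: "'a::field"
  assumes "Al \<noteq> 0" "Ad \<noteq> 0" "1 - Q \<noteq> 0" "1 - P \<noteq> 0"
  shows "An * (1 - P * Q) / (Al * (1 - Q) * (Ad * (1 - P)))
       = An / (Al * (1 - Q) * Ad) + P * (An / (Al * (Ad * (1 - P))))"
proof -
  have "1 - P * Q = (1 - P) + P * (1 - Q)" by (simp add: algebra_simps)
  then show ?thesis using pascal_fld0[OF assms, of An P] by (simp only:)
qed

lemma qbin_pascal:
  assumes "l \<le> n"
  shows "qbin (Suc n) (Suc l) = qbin n (Suc l) + tt ^ (n - l) * qbin n l"
proof (cases "l = n")
  case True
  then show ?thesis by (simp add: qbin_def alpha_nz)
next
  case False
  then have ln: "Suc l \<le> n" using assms by simp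
  define d where "d = n - Suc l"
  have d: "n = l + Suc d" using ln by (simp add: d_def)
  have A1: "alpha (Suc n) = alpha n * (1 - tt ^ Suc n)" by (rule alpha_Suc)
  have A2: "alpha (Suc l) = alpha l * (1 - tt ^ Suc l)" by (rule alpha_Suc)
  have A3: "alpha (Suc d) = alpha d * (1 - tt ^ Suc d)" by (rule alpha_Suc)
  have e1: "n - l = Suc d" "n - Suc l = d" "Suc n - Suc l = Suc d" using d by auto
  have "Suc n = Suc d + Suc l" using d by simp
  then have p: "tt ^ Suc n = tt ^ Suc d * tt ^ Suc l" by (rule pow_split)
  have nz: "alpha l \<noteq> 0" "alpha d \<noteq> 0" "1 - tt ^ Suc l \<noteq> 0" "1 - tt ^ Suc d \<noteq> 0"
    using alpha_nz tt_pow_ne1[of "Suc l"] tt_pow_ne1[of "Suc d"] by (auto simp del: power_Suc)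
  have q1: "qbin (Suc n) (Suc l) = alpha n * (1 - tt ^ Suc d * tt ^ Suc l) /
      (alpha l * (1 - tt ^ Suc l) * (alpha d * (1 - tt ^ Suc d)))"
    using assms unfolding qbin_def by (simp only: e1 A1 A2 A3 p if_True Suc_le_mono)
  have q2: "qbin n (Suc l) = alpha n / (alpha l * (1 - tt ^ Suc l) * alpha d)"
    using ln unfolding qbin_def by (simp only: e1 A2 if_True)
  have q3: "tt ^ (n - l) * qbin n l = tt ^ Suc d * (alpha n / (alpha l * (alpha d * (1 - tt ^ Suc d))))"
    using assms unfolding qbin_def by (simp only: e1 A3 if_True)
  show ?thesis unfolding q1 q2 q3 by (rule pascal_fld[OF nz])
qed

lemma qbinomial:
  "qpoch x n = (\<Sum>l\<le>n. (-1) ^ l * tt ^ (l choose 2) * qbin n l * x ^ l)"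
proof (induction n)
  case 0
  then show ?case by (simp add: qpoch_def numeral_2_eq_2)
next
  case (Suc n)
  define c where "c = (\<lambda>l. (-1) ^ l * tt ^ (l choose 2) * qbin n l)"
  have cn: "c (Suc n) = 0" by (simp add: c_def qbin_def)
  have IH: "qpoch x n = (\<Sum>l\<le>n. c l * x ^ l)" using Suc by (simp add: c_def)
  have "(\<Sum>l\<le>Suc n. (-1) ^ l * tt ^ (l choose 2) * qbin (Suc n) l * x ^ l)
     = 1 + (\<Sum>l\<le>n. (-1) ^ Suc l * tt ^ (Suc l choose 2) * qbin (Suc n) (Suc l) * x ^ Suc l)"
    by (subst sum.atMost_Suc_shift) (simp add: numeral_2_eq_2)
  also have "\<dots> = 1 + (\<Sum>l\<le>n. c (Suc l) * x ^ Suc l) - (\<Sum>l\<le>n. c l * tt ^ n * x ^ Suc l)"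
  proof -
    have "(-1) ^ Suc l * tt ^ (Suc l choose 2) * qbin (Suc n) (Suc l) * x ^ Suc l
        = c (Suc l) * x ^ Suc l - c l * tt ^ n * x ^ Suc l" if "l \<le> n" for l
    proof -
      have "tt ^ (Suc l choose 2) * tt ^ (n - l) = tt ^ (l choose 2) * tt ^ n"
      proof -
        have "(Suc l choose 2) + (n - l) = (l choose 2) + n" using that by (simp add: choose2_Suc)
        then show ?thesis by (simp only: power_add[symmetric])
      qed
      then show ?thesis using that unfolding c_def qbin_pascal[OF that]
        by (simp add: algebra_simps)
    qed
    then show ?thesis by (simp add: sum_subtractf)
  qed
  also have "1 + (\<Sum>l\<le>n. c (Suc l) * x ^ Suc l) = (\<Sum>l\<le>Suc n. c l * x ^ l)"
    unfolding sum.atMost_Suc_shift[of _ n] by (simp add: c_def numeral_2_eq_2)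
  also have "\<dots> = (\<Sum>l\<le>n. c l * x ^ l)" using cn by simp
  also have "(\<Sum>l\<le>n. c l * tt ^ n * x ^ Suc l) = (\<Sum>l\<le>n. c l * x ^ l) * (x * tt ^ n)"
    by (simp add: sum_distrib_right sum_distrib_left algebra_simps)
  finally show ?case by (simp add: qpoch_Suc IH algebra_simps c_def)
qed

lemma P1:
  assumes "m \<le> N"
  shows "qpoch (inverse (tt ^ N)) m * tt ^ (m * N) * alpha (N - m) = (-1) ^ m * tt ^ (m choose 2) * alpha N"
  using assms
proof (induction m)
  case 0
  then show ?case by (simp add: qpoch_def numeral_2_eq_2)
next
  case (Suc m)
  define x where "x = inverse (tt ^ N)"
  have xN: "x * tt ^ N = 1" unfolding x_def using tt_nz by simp
  have IH: "qpoch x m * tt ^ (m * N) * alpha (N - m) = (-1) ^ m * tt ^ (m choose 2) * alpha N"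
    using Suc by (simp add: x_def)
  have e: "N - m = Suc (N - Suc m)" using Suc.prems by simp
  have al: "alpha (N - m) = alpha (N - Suc m) * (1 - tt ^ (N - m))"
    by (simp only: e alpha_Suc)
  have "N = m + (N - m)" using Suc.prems by simp
  then have tN: "tt ^ N = tt ^ m * tt ^ (N - m)" by (rule pow_split)
  have f: "(1 - x * tt ^ m) * tt ^ N = - (tt ^ m * (1 - tt ^ (N - m)))"
  proof -
    have "(1 - x * tt ^ m) * tt ^ N = tt ^ N - (x * tt ^ N) * tt ^ m" by (simp add: algebra_simps)
    also have "\<dots> = tt ^ N - tt ^ m" using xN by simp
    finally show ?thesis using tN by (simp add: algebra_simps)
  qed
  have "qpoch x (Suc m) * tt ^ (Suc m * N) * alpha (N - Suc m)
      = qpoch x m * ((1 - x * tt ^ m) * tt ^ N) * tt ^ (m * N) * alpha (N - Suc m)"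
    by (simp add: qpoch_Suc power_add algebra_simps)
  also have "\<dots> = - (qpoch x m * tt ^ (m * N) * alpha (N - m) * tt ^ m)"
    unfolding f al by (simp add: algebra_simps)
  also have "\<dots> = (-1) ^ Suc m * tt ^ (Suc m choose 2) * alpha N"
    unfolding IH by (simp add: choose2_Suc power_add algebra_simps)
  finally show ?case by (simp add: x_def)
qed

definition W :: "nat \<Rightarrow> nat \<Rightarrow> nat \<Rightarrow> nat \<Rightarrow> rat poly fract" where
  "W J I J' I' = (\<Sum>m = 0..min I I'. (-1) ^ m * tt ^ ((Suc m choose 2) + m * J') *
      alpha (I + J - m) / (alpha (I - m) * alpha (I' - m) * alpha m))"

definition D :: "nat \<Rightarrow> nat \<Rightarrow> nat \<Rightarrow> nat \<Rightarrow> rat poly fract" where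
  "D b a y x = (\<Sum>m\<le>b. \<Sum>l\<le>a. (-1) ^ (m + l) * qbin b m * qbin a l *
      tt ^ ((Suc m choose 2) + m * y + (Suc l choose 2) + l * x) / tt ^ (m * l))"

lemma D_sym: "D b a y x = D a b x y"
  unfolding D_def by (subst sum.swap) (simp add: algebra_simps)

lemma W_sym:
  assumes "I + J = I' + J''"
  shows "W J I J' I' = W J'' I' J' I"
  unfolding W_def using assms by (simp add: min.commute algebra_simps)

lemma P1':
  assumes "m \<le> N"
  shows "qpoch (inverse (tt ^ N)) m = (-1) ^ m * tt ^ (m choose 2) * alpha N / (tt ^ (m * N) * alpha (N - m))"
  using P1[OF assms] alpha_nz tt_nz by (simp add: field_simps)

lemma fld_aux:
  fixes An Ai Ai' Ai'' Aj Aj'' Am Bi Bi' Bn s a Ti Ti' Tn T'' E :: "'a::field"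
  assumes nz: "An \<noteq> 0" "Ai \<noteq> 0" "Ai' \<noteq> 0" "Ai'' \<noteq> 0" "Aj \<noteq> 0" "Aj'' \<noteq> 0" "Am \<noteq> 0"
     "Bi \<noteq> 0" "Bi' \<noteq> 0" "Bn \<noteq> 0" "a \<noteq> 0" "Ti \<noteq> 0" "Ti' \<noteq> 0" "Tn \<noteq> 0"
    and ss: "s * s = 1" and pw: "a * Tn * T'' = E * Ti * Ti'"
  shows "An / (Ai * Ai' * Ai'' * Aj * Aj'') *
     ((s * a * Ai / (Ti * Bi)) * (s * a * Ai' / (Ti' * Bi')) / (Am * (s * a * An / (Tn * Bn))) * T'')
   = s * E * Bn / (Bi * Bi' * Am) / (Ai'' * Aj * Aj'')"
proof -
  have s0: "s \<noteq> 0" using ss by auto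
  have "An / (Ai * Ai' * Ai'' * Aj * Aj'') *
     ((s * a * Ai / (Ti * Bi)) * (s * a * Ai' / (Ti' * Bi')) / (Am * (s * a * An / (Tn * Bn))) * T'')
     = (s * s) * (a * Tn * T'') * Bn / (Ti * Ti' * s * Bi * Bi' * Am * Ai'' * Aj * Aj'')"
    using nz s0 by (simp add: field_simps)
  also have "\<dots> = s * E * Bn / (Bi * Bi' * Am) / (Ai'' * Aj * Aj'')"
    unfolding ss pw using nz s0 ss by (simp add: field_simps)
  finally show ?thesis .
qed

lemma u_W:
  assumes bal: "i'' + j = j' + i'"
  shows "u j i j' i' j'' i'' = W j i j' i' / (alpha i'' * alpha j * alpha j'')"
proof -
  have tm: "alpha (i + j) / (alpha i * alpha i' * alpha i'' * alpha j * alpha j'') *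
     (qpoch (inverse (tt ^ i)) m * qpoch (inverse (tt ^ i')) m /
        (qpoch tt m * qpoch (inverse (tt ^ (i + j))) m) * tt ^ (m * (i'' + 1)))
   = (-1) ^ m * tt ^ ((Suc m choose 2) + m * j') *
      alpha (i + j - m) / (alpha (i - m) * alpha (i' - m) * alpha m) / (alpha i'' * alpha j * alpha j'')"
    if m: "m \<in> {0..min i i'}" for m
  proof -
    have m1: "m \<le> i" "m \<le> i'" "m \<le> i + j" using m by auto
    define s :: "rat poly fract" where "s = (-1) ^ m"
    have ss: "s * s = 1" unfolding s_def by (simp add: power_mult_distrib[symmetric])
    have s0: "s \<noteq> 0" unfolding s_def by simp
    define c where "c = m choose 2"
    have pw: "tt ^ c * tt ^ (m * (i + j)) * tt ^ (m * (i'' + 1))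
       = tt ^ ((Suc m choose 2) + m * j') * tt ^ (m * i) * tt ^ (m * i')"
    proof -
      have "c + m * (i + j) + m * (i'' + 1) = (Suc m choose 2) + m * j' + m * i + m * i'"
      proof -
        have "m * (i'' + j) = m * (j' + i')" using bal by simp
        then show ?thesis unfolding c_def choose2_Suc by (simp add: algebra_simps)
      qed
      then show ?thesis by (simp only: power_add[symmetric])
    qed
    have nz: "alpha k \<noteq> 0" for k by (rule alpha_nz)
    have tnz: "tt ^ k \<noteq> 0" for k using tt_nz by simp
    show ?thesis
      unfolding P1'[OF m1(1)] P1'[OF m1(2)] P1'[OF m1(3)] qpoch_tt s_def[symmetric] c_def[symmetric]
      by (rule fld_aux[OF nz nz nz nz nz nz nz nz nz nz tnz tnz tnz tnz ss]) (use pw in \<open>simp add: algebra_simps\<close>)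
  qed
  show ?thesis
    unfolding u_def W_def sum_distrib_left sum_divide_distrib
    by (rule sum.cong[OF refl], rule tm)
qed

lemma Q1: "qpoch (tt ^ Suc k) J = alpha (k + J) / alpha k"
proof (induction J)
  case 0 then show ?case by (simp add: qpoch_def alpha_nz)
next
  case (Suc J)
  have e: "tt ^ Suc k * tt ^ J = tt ^ Suc (k + J)" by (simp only: power_add[symmetric] add_Suc)
  have "qpoch (tt ^ Suc k) (Suc J) = alpha (k + J) / alpha k * (1 - tt ^ Suc (k + J))"
    by (simp only: qpoch_Suc Suc e)
  then show ?case by (simp only: add_Suc_right alpha_Suc) simp
qed

lemma Q0:
  assumes "I < m" "m \<le> I + J"
  shows "qpoch (tt ^ Suc I / tt ^ m) J = 0"
proof -
  define s where "s = m - Suc I"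
  have sJ: "s < J" using assms unfolding s_def by simp
  have "tt ^ Suc I / tt ^ m * tt ^ s = 1"
  proof -
    have "m = Suc I + s" using assms unfolding s_def by simp
    then have "tt ^ m = tt ^ Suc I * tt ^ s" by (simp only: power_add)
    then show ?thesis using tt_nz by simp
  qed
  then show ?thesis unfolding qpoch_def using sJ
    by (intro prod_zero) auto
qed

lemma Qr:
  assumes "m \<le> I"
  shows "qpoch (tt ^ Suc I / tt ^ m) J = alpha (I + J - m) / alpha (I - m)"
proof -
  have "tt ^ Suc I / tt ^ m = tt ^ Suc (I - m)"
  proof -
    have "Suc I = Suc (I - m) + m" using assms by simp
    then have "tt ^ Suc I = tt ^ Suc (I - m) * tt ^ m" by (rule pow_split)
    then show ?thesis using tt_nz by simp
  qed
  moreover have "I - m + J = I + J - m" using assms by simp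
  ultimately show ?thesis using Q1[of "I - m" J] by simp
qed

lemma G2:
  assumes "I' \<le> I + J"
  shows "alpha I' * W J I J' I' = D I' J J' I"
proof -
  define g where "g = (\<lambda>m. (-1) ^ m * tt ^ ((Suc m choose 2) + m * J') * qbin I' m *
     qpoch (tt ^ Suc I / tt ^ m) J)"
  have "alpha I' * W J I J' I' = (\<Sum>m = 0..min I I'. g m)"
    unfolding W_def sum_distrib_left
  proof (rule sum.cong[OF refl])
    fix m assume "m \<in> {0..min I I'}"
    then have m: "m \<le> I" "m \<le> I'" by auto
    show "alpha I' * ((-1) ^ m * tt ^ ((Suc m choose 2) + m * J') *
      alpha (I + J - m) / (alpha (I - m) * alpha (I' - m) * alpha m)) = g m"
      unfolding g_def Qr[OF m(1)] qbin_def using m alpha_nz by (simp add: ac_simps)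
  qed
  also have "\<dots> = (\<Sum>m\<le>I'. g m)"
  proof (rule sum.mono_neutral_left)
    show "\<forall>m\<in>{..I'} - {0..min I I'}. g m = 0"
    proof
      fix m assume "m \<in> {..I'} - {0..min I I'}"
      then have "I < m" "m \<le> I + J" using assms by auto
      then show "g m = 0" unfolding g_def Q0[OF \<open>I < m\<close> \<open>m \<le> I + J\<close>] by simp
    qed
  qed auto
  also have "\<dots> = D I' J J' I"
    unfolding D_def g_def qbinomial sum_distrib_left
  proof (intro sum.cong refl)
    fix m l
    have "(tt ^ Suc I / tt ^ m) ^ l = tt ^ (Suc I * l) / tt ^ (m * l)"
      by (simp only: power_divide power_mult)
    moreover have "tt ^ (Suc l choose 2) * tt ^ (l * I) = tt ^ (l choose 2) * tt ^ (Suc I * l)"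
    proof -
      have "(Suc l choose 2) + l * I = (l choose 2) + Suc I * l" by (simp add: choose2_Suc)
      then show ?thesis by (simp only: power_add[symmetric])
    qed
    ultimately show "(-1) ^ m * tt ^ ((Suc m choose 2) + m * J') * qbin I' m *
        ((-1) ^ l * tt ^ (l choose 2) * qbin J l * (tt ^ Suc I / tt ^ m) ^ l) =
      (-1) ^ (m + l) * qbin I' m * qbin J l *
        tt ^ ((Suc m choose 2) + m * J' + (Suc l choose 2) + l * I) / tt ^ (m * l)"
      using tt_nz by (simp add: power_add choose2_Suc algebra_simps)
  qed
  finally show ?thesis .
qed

lemma u_rot:
  fixes j i j' i' j'' i'' :: nat
  assumes b1: "int i' - int j = int i'' - int j'"
      and b2: "int i'' - int j' = int i - int j''"
  shows "u j i j' i' j'' i'' = u i j' i' j'' i'' j"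
proof -
  have e1: "i'' + j = j' + i'" and e3: "i + j = i' + j''" and e4: "j + i = i' + j''"
    and c1: "i \<le> i' + j''" and c2: "j'' \<le> j' + i" using b1 b2 by linarith+
  have X1: "alpha i * W j i j' i' = D i j'' j' i'"
    using W_sym[OF e3] G2[OF c1] by simp
  have X2: "alpha j'' * W i j' i' j'' = D j'' i i' j'"
    using G2[OF c2] by simp
  have "u j i j' i' j'' i'' = W j i j' i' / (alpha i'' * alpha j * alpha j'')" by (rule u_W[OF e1])
  also have "\<dots> = D i j'' j' i' / (alpha i * alpha i'' * alpha j * alpha j'')"
    unfolding X1[symmetric] using alpha_nz by (simp add: field_simps)
  also have "\<dots> = D j'' i i' j' / (alpha j'' * alpha j * alpha i * alpha i'')"
    by (simp add: D_sym ac_simps)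
  also have "\<dots> = W i j' i' j'' / (alpha j * alpha i * alpha i'')"
    unfolding X2[symmetric] using alpha_nz by (simp add: field_simps)
  also have "\<dots> = u i j' i' j'' i'' j" by (rule u_W[OF e4, symmetric])
  finally show ?thesis .
qed

theorem lemma3p2:
  fixes j i j' i' j'' i'' :: nat
  assumes "int i' - int j = int i'' - int j'"
      and "int i'' - int j' = int i - int j''"
  shows "u j i j' i' j'' i'' = u j' i' j'' i'' j i
       \<and> u j i j' i' j'' i'' = u i j' i' j'' i'' j
       \<and> u j i j' i' j'' i'' = u j'' i' j' i j i''"
proof (intro conjI)
  show r1: "u j i j' i' j'' i'' = u i j' i' j'' i'' j" by (rule u_rot[OF assms])
  have "u i j' i' j'' i'' j = u j' i' j'' i'' j i" by (rule u_rot) (use assms in linarith)+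
  then show "u j i j' i' j'' i'' = u j' i' j'' i'' j i" using r1 by simp
  have e1: "i'' + j = j' + i'" and e2: "i'' + j'' = j' + i" and e3: "i + j = i' + j''"
    using assms by linarith+
  have "u j'' i' j' i j i'' = W j'' i' j' i / (alpha i'' * alpha j'' * alpha j)" by (rule u_W[OF e2])
  also have "\<dots> = W j i j' i' / (alpha i'' * alpha j * alpha j'')"
    using W_sym[OF e3] by (simp add: ac_simps)
  also have "\<dots> = u j i j' i' j'' i''" by (rule u_W[OF e1, symmetric])
  finally show "u j i j' i' j'' i'' = u j'' i' j' i j i''" by simp
qed

end
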